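(* Let $p \ge 1$ and let $G_p$ be the graph obtained from the cycle $C_6$ by substituting a complete graph $K_p$ for each vertex. Then $G_p$ is $(4K_1, C_4, \text{claw})$-free, $G_p$ is $2p$-colourable, and $G_p$ has a frozen $3p$-colouring.
   Context: All graphs are finite and simple. Substituting a graph $H$ for a vertex $v$ of $G$ means taking $G-v$, adding a disjoint copy of $H$, and joining every vertex of $H$ to every neighbour of $v$ in $G$ (done for each vertex of $C_6$ in turn). A $k$-colouring is a proper colouring with colours $\{1,\dots,k\}$. A $k$-colouring is frozen if, for every vertex $v$, all $k$ colours appear in the closed neighbourhood of $v$ (equivalently, it is an isolated vertex of the reconfiguration graph of $k$-colourings, where two colourings are adjacent if they differ on exactly one vertex). $\mathcal{H}$-free means no induced subgraph isomorphic to a member of $\mathcal{H}$; $4K_1$ is the edgeless graph on 4 vertices, claw is $K_{1,3}$. *)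

theory Defs
  imports Main
begin

text \<open>A graph is a vertex set together with an adjacency relation.
  All graphs used below are finite and simple (symmetric, irreflexive adjacency
  supported on the vertex set).\<close>

type_synonym 'a graph = "'a set \<times> ('a \<Rightarrow> 'a \<Rightarrow> bool)"

definition verts :: "'a graph \<Rightarrow> 'a set" where "verts G = fst G"
definition adj :: "'a graph \<Rightarrow> 'a \<Rightarrow> 'a \<Rightarrow> bool" where "adj G = snd G"

definition simple_graph :: "'a graph \<Rightarrow> bool" where
  "simple_graph G \<longleftrightarrow> finite (verts G) \<and>
     (\<forall>u v. adj G u v \<longrightarrow> u \<in> verts G \<and> v \<in> verts G \<and> u \<noteq> v \<and> adj G v u)"

text \<open>Cycle C_n on vertices 0..n-1 (meant for n >= 3).\<close>
definition cycle_graph :: "nat \<Rightarrow> nat graph" where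
  "cycle_graph n = ({0..<n}, \<lambda>i j. i < n \<and> j < n \<and> (j = (i + 1) mod n \<or> i = (j + 1) mod n))"

definition complete_graph :: "nat \<Rightarrow> nat graph" where
  "complete_graph p = ({0..<p}, \<lambda>a b. a < p \<and> b < p \<and> a \<noteq> b)"

definition edgeless_graph :: "nat \<Rightarrow> nat graph" where
  "edgeless_graph n = ({0..<n}, \<lambda>a b. False)"

definition claw :: "nat graph" where
  "claw = ({0..<4}, \<lambda>i j. i < 4 \<and> j < 4 \<and> i \<noteq> j \<and> (i = 0 \<or> j = 0))"

text \<open>Substituting the graph H v for every vertex v of G (the result of doing the
  substitution for each vertex in turn): the copy of H v replaces v, and every vertex of
  the copy of H v is joined to every vertex of the copy of H w whenever v w is an edge of G.\<close>
definition subst_all :: "'a graph \<Rightarrow> ('a \<Rightarrow> 'b graph) \<Rightarrow> ('a \<times> 'b) graph" where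
  "subst_all G H =
     ({(v, x). v \<in> verts G \<and> x \<in> verts (H v)},
      \<lambda>(v, x) (w, y). v \<in> verts G \<and> x \<in> verts (H v) \<and> w \<in> verts G \<and> y \<in> verts (H w) \<and>
         ((v = w \<and> adj (H v) x y) \<or> adj G v w))"

definition G_p :: "nat \<Rightarrow> (nat \<times> nat) graph" where
  "G_p p = subst_all (cycle_graph 6) (\<lambda>_. complete_graph p)"

definition induced_subgraph_iso :: "'b graph \<Rightarrow> 'a graph \<Rightarrow> bool" where
  "induced_subgraph_iso H G \<longleftrightarrow>
     (\<exists>f. inj_on f (verts H) \<and> f ` verts H \<subseteq> verts G \<and>
          (\<forall>u\<in>verts H. \<forall>v\<in>verts H. adj H u v \<longleftrightarrow> adj G (f u) (f v)))"

definition free_of :: "'b graph set \<Rightarrow> 'a graph \<Rightarrow> bool" where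
  "free_of Hs G \<longleftrightarrow> (\<forall>H\<in>Hs. \<not> induced_subgraph_iso H G)"

definition colouring :: "'a graph \<Rightarrow> nat \<Rightarrow> ('a \<Rightarrow> nat) \<Rightarrow> bool" where
  "colouring G k c \<longleftrightarrow> (\<forall>v\<in>verts G. c v \<in> {1..k}) \<and>
     (\<forall>u v. adj G u v \<longrightarrow> c u \<noteq> c v)"

definition colourable :: "'a graph \<Rightarrow> nat \<Rightarrow> bool" where
  "colourable G k \<longleftrightarrow> (\<exists>c. colouring G k c)"

definition frozen_colouring :: "'a graph \<Rightarrow> nat \<Rightarrow> ('a \<Rightarrow> nat) \<Rightarrow> bool" where
  "frozen_colouring G k c \<longleftrightarrow> colouring G k c \<and>
     (\<forall>v\<in>verts G. {1..k} \<subseteq> c ` ({v} \<union> {u. adj G v u}))"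

end

theory Submission
  imports Defs
begin

definition R6 :: "nat \<Rightarrow> nat \<Rightarrow> bool" where
  "R6 A B \<longleftrightarrow> A = B \<or> B = (A + 1) mod 6 \<or> A = (B + 1) mod 6"

lemma verts_Gp: "verts (G_p p) = {(v, x). v < 6 \<and> x < p}"
  by (auto simp: G_p_def subst_all_def verts_def cycle_graph_def complete_graph_def)

lemma adj_Gp: "adj (G_p p) (v, x) (w, y) \<longleftrightarrow> v < 6 \<and> x < p \<and> w < 6 \<and> y < p \<and>
   ((v = w \<and> x \<noteq> y) \<or> w = (v + 1) mod 6 \<or> v = (w + 1) mod 6)"
  by (auto simp: G_p_def subst_all_def verts_def adj_def cycle_graph_def complete_graph_def)

lemma adj_Gp_R: "u \<in> verts (G_p p) \<Longrightarrow> w \<in> verts (G_p p) \<Longrightarrow> u \<noteq> w \<Longrightarrow>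
   adj (G_p p) u w \<longleftrightarrow> R6 (fst u) (fst w)"
  by (cases u; cases w) (auto simp: verts_Gp adj_Gp R6_def)

lemma R6_tab: "R6 0 0 = True" "R6 0 1 = True" "R6 0 2 = False" "R6 0 3 = False" "R6 0 4 = False" "R6 0 5 = True" "R6 1 0 = True" "R6 1 1 = True" "R6 1 2 = True" "R6 1 3 = False" "R6 1 4 = False" "R6 1 5 = False" "R6 2 0 = False" "R6 2 1 = True" "R6 2 2 = True" "R6 2 3 = True" "R6 2 4 = False" "R6 2 5 = False" "R6 3 0 = False" "R6 3 1 = False" "R6 3 2 = True" "R6 3 3 = True" "R6 3 4 = True" "R6 3 5 = False" "R6 4 0 = False" "R6 4 1 = False" "R6 4 2 = False" "R6 4 3 = True" "R6 4 4 = True" "R6 4 5 = True" "R6 5 0 = True" "R6 5 1 = False" "R6 5 2 = False" "R6 5 3 = False" "R6 5 4 = True" "R6 5 5 = True"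
  by (simp_all add: R6_def)

lemma six: "(A::nat) < 6 \<Longrightarrow> A = 0 \<or> A = 1 \<or> A = 2 \<or> A = 3 \<or> A = 4 \<or> A = 5" by linarith

lemma all6: "(\<forall>A<(6::nat). P A) \<longleftrightarrow> P 0 \<and> P 1 \<and> P 2 \<and> P 3 \<and> P 4 \<and> P 5"
  using six by fastforce

lemma no4': "\<forall>A<6. \<forall>B<6. \<forall>C<6. \<forall>D<6.
  \<not> R6 A B \<longrightarrow> \<not> R6 A C \<longrightarrow> \<not> R6 A D \<longrightarrow> \<not> R6 B C \<longrightarrow> \<not> R6 B D \<longrightarrow> \<not> R6 C D \<longrightarrow> False"
  unfolding all6 by (simp only: R6_tab simp_thms)

lemma noC4': "\<forall>A<6. \<forall>B<6. \<forall>C<6. \<forall>D<6.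
  R6 A B \<longrightarrow> R6 B C \<longrightarrow> R6 C D \<longrightarrow> R6 D A \<longrightarrow> \<not> R6 A C \<longrightarrow> \<not> R6 B D \<longrightarrow> False"
  unfolding all6 by (simp only: R6_tab simp_thms)

lemma noclaw': "\<forall>A<6. \<forall>B<6. \<forall>C<6. \<forall>D<6.
  R6 A B \<longrightarrow> R6 A C \<longrightarrow> R6 A D \<longrightarrow> \<not> R6 B C \<longrightarrow> \<not> R6 B D \<longrightarrow> \<not> R6 C D \<longrightarrow> False"
  unfolding all6 by (simp only: R6_tab simp_thms)

lemma no4: "A < 6 \<Longrightarrow> B < 6 \<Longrightarrow> C < 6 \<Longrightarrow> D < 6 \<Longrightarrow>
  \<not> R6 A B \<Longrightarrow> \<not> R6 A C \<Longrightarrow> \<not> R6 A D \<Longrightarrow> \<not> R6 B C \<Longrightarrow> \<not> R6 B D \<Longrightarrow> \<not> R6 C D \<Longrightarrow> False"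
  using no4' by blast

lemma noC4: "A < 6 \<Longrightarrow> B < 6 \<Longrightarrow> C < 6 \<Longrightarrow> D < 6 \<Longrightarrow>
  R6 A B \<Longrightarrow> R6 B C \<Longrightarrow> R6 C D \<Longrightarrow> R6 D A \<Longrightarrow> \<not> R6 A C \<Longrightarrow> \<not> R6 B D \<Longrightarrow> False"
  using noC4' by blast

lemma noclaw: "A < 6 \<Longrightarrow> B < 6 \<Longrightarrow> C < 6 \<Longrightarrow> D < 6 \<Longrightarrow>
  R6 A B \<Longrightarrow> R6 A C \<Longrightarrow> R6 A D \<Longrightarrow> \<not> R6 B C \<Longrightarrow> \<not> R6 B D \<Longrightarrow> \<not> R6 C D \<Longrightarrow> False"
  using noclaw' by blast

lemma extr4:
  assumes "inj_on f {0..<(4::nat)}" "f ` {0..<4} \<subseteq> verts (G_p p)"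
    "\<forall>u\<in>{0..<4}. \<forall>v\<in>{0..<4}. E u v \<longleftrightarrow> adj (G_p p) (f u) (f v)"
  shows "\<forall>i<4. \<forall>j<4. i \<noteq> j \<longrightarrow> (E i j \<longleftrightarrow> R6 (fst (f i)) (fst (f j)))"
    "\<forall>i<4. fst (f i) < 6"
proof -
  show "\<forall>i<4. \<forall>j<4. i \<noteq> j \<longrightarrow> (E i j \<longleftrightarrow> R6 (fst (f i)) (fst (f j)))"
  proof (intro allI impI)
    fix i j :: nat assume h: "i < 4" "j < 4" "i \<noteq> j"
    have "f i \<noteq> f j" using assms(1) h by (auto simp: inj_on_def)
    moreover have "f i \<in> verts (G_p p)" "f j \<in> verts (G_p p)" using assms(2) h by auto
    ultimately show "E i j \<longleftrightarrow> R6 (fst (f i)) (fst (f j))"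
      using assms(3) h adj_Gp_R by auto
  qed
  show "\<forall>i<4. fst (f i) < 6"
  proof (intro allI impI)
    fix i :: nat assume "i < 4"
    then have "f i \<in> verts (G_p p)" using assms(2) by auto
    then show "fst (f i) < 6" by (auto simp: verts_Gp)
  qed
qed

lemma free: "free_of {edgeless_graph 4, cycle_graph 4, claw} (G_p p)"
  unfolding free_of_def induced_subgraph_iso_def
proof (intro ballI notI)
  fix H :: "nat graph" assume H: "H \<in> {edgeless_graph 4, cycle_graph 4, claw}"
  assume "\<exists>f. inj_on f (verts H) \<and> f ` verts H \<subseteq> verts (G_p p) \<and>
          (\<forall>u\<in>verts H. \<forall>v\<in>verts H. adj H u v \<longleftrightarrow> adj (G_p p) (f u) (f v))"
  then obtain f where f: "inj_on f (verts H)" "f ` verts H \<subseteq> verts (G_p p)"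
    "\<forall>u\<in>verts H. \<forall>v\<in>verts H. adj H u v \<longleftrightarrow> adj (G_p p) (f u) (f v)" by blast
  have vH: "verts H = {0..<4}" using H
    by (auto simp: edgeless_graph_def cycle_graph_def claw_def verts_def)
  note e = extr4[OF f[unfolded vH]]
  define A where "A = fst (f 0)"
  define B where "B = fst (f 1)"
  define C where "C = fst (f 2)"
  define D where "D = fst (f 3)"
  have lt: "A < 6" "B < 6" "C < 6" "D < 6" using e(2) by (auto simp: A_def B_def C_def D_def)
  have r: "adj H 0 1 = R6 A B" "adj H 0 2 = R6 A C" "adj H 0 3 = R6 A D"
    "adj H 1 2 = R6 B C" "adj H 1 3 = R6 B D" "adj H 2 3 = R6 C D"
    "adj H 3 0 = R6 D A" "adj H 2 1 = R6 C B"
    using e(1) by (auto simp: A_def B_def C_def D_def)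
  from H show False
  proof (elim insertE emptyE)
    assume "H = edgeless_graph 4"
    then have "\<not> adj H 0 1" "\<not> adj H 0 2" "\<not> adj H 0 3" "\<not> adj H 1 2" "\<not> adj H 1 3" "\<not> adj H 2 3"
      by (simp_all add: edgeless_graph_def adj_def)
    then show False using no4[OF lt] unfolding r by blast
  next
    assume "H = cycle_graph 4"
    then have "adj H 0 1" "adj H 1 2" "adj H 2 3" "adj H 3 0" "\<not> adj H 0 2" "\<not> adj H 1 3"
      by (simp_all add: cycle_graph_def adj_def)
    then show False using noC4[OF lt] unfolding r by blast
  next
    assume "H = claw"
    then have "adj H 0 1" "adj H 0 2" "adj H 0 3" "\<not> adj H 1 2" "\<not> adj H 1 3" "\<not> adj H 2 3"
      by (simp_all add: claw_def adj_def)
    then show False using noclaw[OF lt] unfolding r by blast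
  qed
qed

lemma blk: "(a::nat) * p + x = b * p + y \<Longrightarrow> x < p \<Longrightarrow> y < p \<Longrightarrow> a = b \<and> x = y"
proof -
  assume h: "a * p + x = b * p + y" "x < p" "y < p"
  have p0: "0 < p" using h by simp
  have "(a * p + x) div p = a" "(b * p + y) div p = b" using h(2,3) p0 by simp_all
  moreover have "(a * p + x) mod p = x" "(b * p + y) mod p = y" using h(2,3) by simp_all
  ultimately show ?thesis using h(1) by (metis add.commute)
qed

lemma par2: "(v::nat) < 6 \<Longrightarrow> w < 6 \<Longrightarrow> w = (v + 1) mod 6 \<or> v = (w + 1) mod 6 \<Longrightarrow> v mod 2 \<noteq> w mod 2"
  using six[of v] six[of w] by auto

lemma par3: "(v::nat) < 6 \<Longrightarrow> w < 6 \<Longrightarrow> w = (v + 1) mod 6 \<or> v = (w + 1) mod 6 \<Longrightarrow> v mod 3 \<noteq> w mod 3"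
  using six[of v] six[of w] by auto

lemma pick3': "(a::nat) < 6 \<Longrightarrow> (j::nat) < 3 \<Longrightarrow> \<exists>b\<in>{a, (a + 1) mod 6, (a + 5) mod 6}. b mod 3 = j"
proof -
  assume "a < 6" "j < 3"
  then have "j = 0 \<or> j = 1 \<or> j = 2" by linarith
  then show ?thesis using six[OF \<open>a < 6\<close>]
    by (elim disjE) simp_all
qed

lemma pick3: "(a::nat) < 6 \<Longrightarrow> (j::nat) < 3 \<Longrightarrow> \<exists>b. b mod 3 = j \<and> (b = a \<or> b = (a + 1) mod 6 \<or> b = (a + 5) mod 6)"
  using pick3' by blast

lemma col2: "colourable (G_p p) (2 * p)"
  unfolding colourable_def colouring_def
proof (intro exI conjI allI impI ballI)
  fix u assume "u \<in> verts (G_p p)"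
  then obtain v x where u: "u = (v, x)" "v < 6" "x < p" by (auto simp: verts_Gp)
  have "v mod 2 \<le> 1" by simp
  then have "(v mod 2) * p \<le> p" by (metis mult_1 mult_le_mono1)
  then have "(v mod 2) * p + x + 1 \<le> 2 * p" using u by linarith
  then show "(\<lambda>(v, x). (v mod 2) * p + x + 1) u \<in> {1..2 * p}"
    using u by auto
next
  fix u w assume a: "adj (G_p p) u w"
  obtain v x where u: "u = (v, x)" by (cases u)
  obtain v' y where w: "w = (v', y)" by (cases w)
  show "(\<lambda>(v, x). (v mod 2) * p + x + 1) u \<noteq> (\<lambda>(v, x). (v mod 2) * p + x + 1) w"
  proof
    assume "(\<lambda>(v, x). (v mod 2) * p + x + 1) u = (\<lambda>(v, x). (v mod 2) * p + x + 1) w"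
    then have "(v mod 2) * p + x = (v' mod 2) * p + y" using u w by simp
    moreover have h: "v < 6" "x < p" "v' < 6" "y < p"
      "(v = v' \<and> x \<noteq> y) \<or> v' = (v + 1) mod 6 \<or> v = (v' + 1) mod 6"
      using a u w by (auto simp: adj_Gp)
    ultimately have "v mod 2 = v' mod 2" "x = y" using blk by blast+
    then show False using h par2 by blast
  qed
qed

lemma frz: "\<exists>c. frozen_colouring (G_p p) (3 * p) c"
proof -
  define c where "c = (\<lambda>(v::nat, x::nat). (v mod 3) * p + x + 1)"
  have col: "colouring (G_p p) (3 * p) c"
    unfolding colouring_def
  proof (intro conjI allI impI ballI)
    fix u assume "u \<in> verts (G_p p)"
    then obtain v x where u: "u = (v, x)" "v < 6" "x < p" by (auto simp: verts_Gp)
    have "v mod 3 \<le> 2" by simp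
    then have "(v mod 3) * p \<le> 2 * p" by (metis mult_le_mono1)
    then have "(v mod 3) * p + x + 1 \<le> 3 * p" using u by linarith
    then show "c u \<in> {1..3 * p}"
      using u by (auto simp: c_def)
  next
    fix u w assume a: "adj (G_p p) u w"
    obtain v x where u: "u = (v, x)" by (cases u)
    obtain v' y where w: "w = (v', y)" by (cases w)
    show "c u \<noteq> c w"
    proof
      assume "c u = c w"
      then have "(v mod 3) * p + x = (v' mod 3) * p + y" using u w by (simp add: c_def)
      moreover have h: "v < 6" "x < p" "v' < 6" "y < p"
        "(v = v' \<and> x \<noteq> y) \<or> v' = (v + 1) mod 6 \<or> v = (v' + 1) mod 6"
        using a u w by (auto simp: adj_Gp)
      ultimately have "v mod 3 = v' mod 3" "x = y" using blk by blast+
      then show False using h par3 by blast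
    qed
  qed
  have "\<forall>u\<in>verts (G_p p). {1..3 * p} \<subseteq> c ` ({u} \<union> {w. adj (G_p p) u w})"
  proof (intro ballI subsetI)
    fix u k assume "u \<in> verts (G_p p)" "k \<in> {1..3 * p}"
    then obtain a x where u: "u = (a, x)" "a < 6" "x < p" and k: "1 \<le> k" "k \<le> 3 * p"
      by (auto simp: verts_Gp)
    have pp: "0 < p" using u by simp
    define j where "j = (k - 1) div p"
    define z where "z = (k - 1) mod p"
    have kj: "k - 1 = j * p + z" by (simp add: j_def z_def)
    have z: "z < p" using pp by (simp add: z_def)
    have "k - 1 < 3 * p" using k by simp
    then have j: "j < 3" unfolding j_def using pp
      by (simp add: div_less_iff_less_mult mult.commute)
    obtain b where b: "b mod 3 = j" "b = a \<or> b = (a + 1) mod 6 \<or> b = (a + 5) mod 6"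
      using pick3[OF u(2) j] by blast
    have "c (b, z) = k" using kj b k by (simp add: c_def)
    moreover have "(b, z) = u \<or> adj (G_p p) u (b, z)"
    proof (cases "(b, z) = u")
      case False
      have "b < 6" using b u by auto
      moreover have "a = b \<or> b = (a + 1) mod 6 \<or> a = (b + 1) mod 6"
        using b(2) u(2) six[OF u(2)] by auto
      ultimately show ?thesis using False u z
        by (auto simp: adj_Gp)
    qed simp
    ultimately show "k \<in> c ` ({u} \<union> {w. adj (G_p p) u w})" by force
  qed
  then show ?thesis using col unfolding frozen_colouring_def by blast
qed

theorem lemma1:
  fixes p :: nat
  assumes "p \<ge> 1"
  shows "free_of {edgeless_graph 4, cycle_graph 4, claw} (G_p p)
         \<and> colourable (G_p p) (2 * p)
         \<and> (\<exists>c. frozen_colouring (G_p p) (3 * p) c)"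
  using free col2 frz by blast

end
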